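(* Let $N\ge1$, let $\tilde\chi$ be a Dirichlet character modulo $N$ with associated character $\chi$ on $\Gamma_0^{(2)}(N)$, let $f\in S_2^k(\Gamma_0^{(2)}(N),\chi)$, and let $s$ be a symmetric positive definite $2\times2$ integral matrix with $l'=\det(s)$. Then for every $d\in(\mathbb{Z}/l'N\mathbb{Z})^\times$, \[\langle d\rangle\,\phi_s^*(f)=\chi(dI_2)\,\phi_s^*(f).\]
   Context: $\Gamma_0^{(2)}(N)=\{\begin{pmatrix}A&B\\C&D\end{pmatrix}\in \mathrm{Sp}_4(\mathbb{Z}) : C\equiv 0 \pmod N\}$. For $M=\begin{pmatrix}A&B\\C&D\end{pmatrix}$, $F|_kM(Z)=\det(CZ+D)^{-k}F((AZ+B)(CZ+D)^{-1})$ on the Siegel upper half space $\mathbb{H}_2$ of genus 2. The character is $\chi(M)=\tilde\chi(\det D)$, and more generally for an integral $2\times2$ matrix $D$ one writes $\chi(D)=\tilde\chi(\det D)$ (so $\chi(dI_2)=\tilde\chi(d^2)$, with $d$ reduced modulo $N$). $S_2^k(\Gamma_0^{(2)}(N),\chi)$ is the space of Siegel cusp forms $f$ of degree 2, weight $k$ with $f|_kM=\chi(M)f$ for all $M\in\Gamma_0^{(2)}(N)$. The restriction $\phi_s^*(f)(\tau)=f(s\tau)$ ($\tau$ in the upper half plane) is an elliptic cusp form of weight $2k$ on $\Gamma_1(Nl')$. For $g$ of weight $2k$ on $\Gamma_1(Nl')$ and $d\in(\mathbb{Z}/l'N\mathbb{Z})^\times$, the diamond operator is $\langle d\rangle g=g|_{2k}\alpha$,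 $(g|_{2k}\alpha)(\tau)=(c\tau+\delta)^{-2k}g(\alpha\tau)$, for any $\alpha=\begin{pmatrix}a&b\\c&\delta\end{pmatrix}\in\Gamma_0(Nl')$ with $\delta\equiv d\pmod{Nl'}$. *)

theory Defs
  imports "HOL-Analysis.Analysis"
begin

definition mat2 :: "'a \<Rightarrow> 'a \<Rightarrow> 'a \<Rightarrow> 'a \<Rightarrow> 'a^2^2" where
  "mat2 a b c d = (\<chi> i j. if i = 1 then (if j = 1 then a else b) else (if j = 1 then c else d))"

definition cmat :: "int^2^2 \<Rightarrow> complex^2^2" where
  "cmat A = (\<chi> i j. of_int (A$i$j))"

definition Im_mat :: "complex^2^2 \<Rightarrow> real^2^2" where
  "Im_mat Z = (\<chi> i j. Im (Z$i$j))"

definition pos_def_real :: "real^2^2 \<Rightarrow> bool" where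
  "pos_def_real Y \<longleftrightarrow> transpose Y = Y \<and> (\<forall>x::real^2. x \<noteq> 0 \<longrightarrow> 0 < x \<bullet> (Y *v x))"

definition siegel_H2 :: "(complex^2^2) set" where
  "siegel_H2 = {Z. transpose Z = Z \<and> pos_def_real (Im_mat Z)}"

text \<open>Sp_4(Z): M = (A B; C D) with M^T J M = J, written out in 2x2 blocks.\<close>
definition Sp4Z :: "((int^2^2) \<times> (int^2^2) \<times> (int^2^2) \<times> (int^2^2)) set" where
  "Sp4Z = {(A::int^2^2,B::int^2^2,C::int^2^2,D::int^2^2). transpose A ** C = transpose C ** A \<and>
                      transpose B ** D = transpose D ** B \<and>
                      transpose A ** D - transpose C ** B = (mat 1 :: int^2^2)}"

definition Gamma0_2 :: "int \<Rightarrow> ((int^2^2) \<times> (int^2^2) \<times> (int^2^2) \<times> (int^2^2)) set" where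
  "Gamma0_2 N = {(A,B,C,D). (A,B,C,D) \<in> Sp4Z \<and> (\<forall>i j. N dvd C$i$j)}"

definition slash2 :: "nat \<Rightarrow> (complex^2^2 \<Rightarrow> complex) \<Rightarrow>
    ((int^2^2) \<times> (int^2^2) \<times> (int^2^2) \<times> (int^2^2)) \<Rightarrow> complex^2^2 \<Rightarrow> complex" where
  "slash2 k F M Z = (case M of (A,B,C,D) \<Rightarrow>
     inverse (det (cmat C ** Z + cmat D)) ^ k *
     F ((cmat A ** Z + cmat B) ** matrix_inv (cmat C ** Z + cmat D)))"

definition dirichlet_char :: "int \<Rightarrow> (int \<Rightarrow> complex) \<Rightarrow> bool" where
  "dirichlet_char N chi \<longleftrightarrow> N \<ge> 1 \<and> chi 1 = 1 \<and>
     (\<forall>a b. chi (a * b) = chi a * chi b) \<and>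
     (\<forall>a. chi (a + N) = chi a) \<and>
     (\<forall>a. chi a \<noteq> 0 \<longleftrightarrow> coprime a N)"

text \<open>Holomorphy on H_2, in the coordinates Z = (z1 z2; z2 z3): continuous and
  holomorphic in each variable separately (equivalent to holomorphy by Osgood's lemma).\<close>
definition holo_H2 :: "(complex^2^2 \<Rightarrow> complex) \<Rightarrow> bool" where
  "holo_H2 F \<longleftrightarrow>
     continuous_on {(a,b,c). mat2 a b b c \<in> siegel_H2} (\<lambda>(a,b,c). F (mat2 a b b c)) \<and>
     (\<forall>a b c. mat2 a b b c \<in> siegel_H2 \<longrightarrow>
        (\<lambda>w. F (mat2 w b b c)) field_differentiable at a \<and>
        (\<lambda>w. F (mat2 a w w c)) field_differentiable at b \<and>
        (\<lambda>w. F (mat2 a b b w)) field_differentiable at c)"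

definition Phi_vanishes :: "(complex^2^2 \<Rightarrow> complex) \<Rightarrow> bool" where
  "Phi_vanishes F \<longleftrightarrow> (\<forall>z. Im z > 0 \<longrightarrow>
     ((\<lambda>t::real. F (mat2 z 0 0 (\<i> * of_real t))) \<longlongrightarrow> 0) at_top)"

definition siegel_cusp_forms :: "nat \<Rightarrow> int \<Rightarrow> (int \<Rightarrow> complex) \<Rightarrow> (complex^2^2 \<Rightarrow> complex) set" where
  "siegel_cusp_forms k N chi = {F. holo_H2 F \<and>
     (\<forall>M \<in> Gamma0_2 N. \<forall>Z \<in> siegel_H2.
        slash2 k F M Z = chi (det (snd (snd (snd M)))) * F Z) \<and>
     (\<forall>M \<in> Sp4Z. Phi_vanishes (slash2 k F M))}"

definition phi_restr :: "int^2^2 \<Rightarrow> (complex^2^2 \<Rightarrow> complex) \<Rightarrow> complex \<Rightarrow> complex" where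
  "phi_restr s F \<tau> = F ((\<chi> i j. \<tau> * of_int (s$i$j)))"

definition slash1 :: "nat \<Rightarrow> (complex \<Rightarrow> complex) \<Rightarrow> int \<times> int \<times> int \<times> int \<Rightarrow> complex \<Rightarrow> complex" where
  "slash1 w g \<alpha> \<tau> = (case \<alpha> of (a,b,c,\<delta>) \<Rightarrow>
     inverse (of_int c * \<tau> + of_int \<delta>) ^ w * g ((of_int a * \<tau> + of_int b) / (of_int c * \<tau> + of_int \<delta>)))"

definition Gamma0 :: "int \<Rightarrow> (int \<times> int \<times> int \<times> int) set" where
  "Gamma0 M = {(a,b,c,\<delta>). a * \<delta> - b * c = 1 \<and> M dvd c}"

text \<open>Diamond operator <d> g = g|_w alpha for any alpha in Gamma_0(M) with delta = d mod M;
  "diamond_eq w M d g h" says that <d> g = h on the upper half plane, for every such alpha.\<close>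
definition diamond_eq :: "nat \<Rightarrow> int \<Rightarrow> int \<Rightarrow> (complex \<Rightarrow> complex) \<Rightarrow> (complex \<Rightarrow> complex) \<Rightarrow> bool" where
  "diamond_eq w M d g h \<longleftrightarrow> (\<forall>a b c \<delta>. (a,b,c,\<delta>) \<in> Gamma0 M \<and> \<delta> mod M = d mod M \<longrightarrow>
      (\<forall>\<tau>. Im \<tau> > 0 \<longrightarrow> slash1 w g (a,b,c,\<delta>) \<tau> = h \<tau>))"

end

theory Submission
  imports Defs
begin

lemma mat2_nth[simp]:
  "mat2 a b c d $ 1 $ 1 = a" "mat2 a b c d $ 1 $ 2 = b"
  "mat2 a b c d $ 2 $ 1 = c" "mat2 a b c d $ 2 $ 2 = d"
  by (simp_all add: mat2_def)

lemma mat2_eta: "A = mat2 (A$1$1) (A$1$2) (A$2$1) (A$2$2)"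
  by (simp add: vec_eq_iff forall_2)

lemma mat2_eq_iff: "mat2 a b c d = mat2 a' b' c' d' \<longleftrightarrow> a = a' \<and> b = b' \<and> c = c' \<and> d = d'"
  by (auto simp add: vec_eq_iff forall_2)

lemma mat2_mult: "mat2 a b c d ** mat2 e f g h = mat2 (a*e+b*g) (a*f+b*h) (c*e+d*g) (c*f+(d::'a::semiring_1)*h)"
  by (simp add: vec_eq_iff forall_2 matrix_matrix_mult_def sum_2)

lemma mat2_add: "mat2 a b c d + mat2 e f g h = mat2 (a+e) (b+f) (c+g) ((d::'a::plus)+h)"
  by (simp add: vec_eq_iff forall_2)

lemma mat2_diff: "mat2 a b c d - mat2 e f g h = mat2 (a-e) (b-f) (c-g) ((d::'a::minus)-h)"
  by (simp add: vec_eq_iff forall_2)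

lemma mat2_transpose: "transpose (mat2 a b c d) = mat2 a c b d"
  by (simp add: vec_eq_iff forall_2 transpose_def)

lemma mat2_det: "det (mat2 a b c (d::'a::comm_ring_1)) = a*d - b*c"
  by (simp add: det_2)

lemma mat2_one: "(mat 1 :: 'a::zero_neq_one^2^2) = mat2 1 0 0 1"
  by (simp add: vec_eq_iff forall_2 mat_def)

lemma cmat_mat2: "cmat (mat2 a b c d) = mat2 (of_int a) (of_int b) (of_int c) (of_int d)"
  by (simp add: vec_eq_iff forall_2 cmat_def)

lemma Im_mat2: "Im_mat (mat2 a b c d) = mat2 (Im a) (Im b) (Im c) (Im d)"
  by (simp add: vec_eq_iff forall_2 Im_mat_def)

lemma lam_mat2: "(\<chi> i j. f i j) = mat2 (f 1 1) (f 1 2) (f 2 1) (f 2 2)"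
  by (simp add: vec_eq_iff forall_2)

lemma matrix_inv_scalar:
  fixes x :: complex assumes "x \<noteq> 0"
  shows "matrix_inv (mat2 x 0 0 x) = mat2 (inverse x) 0 0 (inverse x)"
proof -
  let ?A = "mat2 x 0 0 x" and ?B = "mat2 (inverse x) 0 0 (inverse x)"
  have AB: "?A ** ?B = mat 1" "?B ** ?A = mat 1" using assms by (simp_all add: mat2_mult mat2_one)
  hence ex: "\<exists>X. ?A ** X = mat 1 \<and> X ** ?A = mat 1" by blast
  define X where "X = matrix_inv ?A"
  have X: "?A ** X = mat 1 \<and> X ** ?A = mat 1" unfolding X_def matrix_inv_def using someI_ex[OF ex] by simp
  have "X = X ** (?A ** ?B)" using AB by (simp add: matrix_mul_rid)
  also have "\<dots> = (X ** ?A) ** ?B" by (simp add: matrix_mul_assoc)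
  also have "\<dots> = ?B" using X by (simp add: matrix_mul_lid)
  finally show ?thesis by (simp add: X_def)
qed

lemma chi_periodic:
  assumes "dirichlet_char N chi" shows "chi (x + N * t) = chi x"
proof -
  have per: "\<And>a. chi (a + N) = chi a" using assms by (simp add: dirichlet_char_def)
  have "\<forall>x. chi (x + N * t) = chi x"
  proof (induction t rule: int_induct[where k=0])
    case base then show ?case by simp
  next
    case (step1 i) then show ?case
      by (metis (no_types, lifting) add.assoc distrib_left mult.right_neutral per)
  next
    case (step2 i)
    show ?case
    proof
      fix x
      have "chi (x + N * (i - 1)) = chi (x + N * (i - 1) + N)" using per by simp
      also have "\<dots> = chi (x + N * i)" by (simp add: algebra_simps)
      finally show "chi (x + N * (i - 1)) = chi x" using step2 by simp
    qed
  qed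
  thus ?thesis by blast
qed

theorem lemma4p1:
  fixes N :: int and chi :: "int \<Rightarrow> complex" and k :: nat
    and f :: "complex^2^2 \<Rightarrow> complex" and s :: "int^2^2" and l' :: int and d :: int
  assumes "N \<ge> 1"
    and "dirichlet_char N chi"
    and "f \<in> siegel_cusp_forms k N chi"
    and "transpose s = s"
    and "pos_def_real (\<chi> i j. real_of_int (s$i$j))"
    and "l' = det s"
    and "coprime d (l' * N)"
  shows "diamond_eq (2 * k) (N * l') d (phi_restr s f) (\<lambda>\<tau>. chi (d^2) * phi_restr s f \<tau>)"
  unfolding diamond_eq_def
proof (intro allI impI)
  fix a b c \<delta> \<tau>
  assume H: "(a, b, c, \<delta>) \<in> Gamma0 (N * l') \<and> \<delta> mod (N * l') = d mod (N * l')"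
  assume tau: "0 < Im \<tau>"
  define p where "p = s$1$1"
  define q where "q = s$1$2"
  define r where "r = s$2$2"
  have s21: "s$2$1 = q" using assms(4) unfolding q_def
    by (metis mat2_nth(2,3) mat2_transpose[of "s$1$1" "s$1$2" "s$2$1" "s$2$2"] mat2_eta[of s])
  have sdef: "s = mat2 p q q r" using mat2_eta[of s] by (simp only: s21 p_def[symmetric] q_def[symmetric] r_def[symmetric])
  have l: "l' = p*r - q*q" using assms(6) sdef by (simp add: mat2_det)
  have det1: "a * \<delta> - b * c = 1" and dv: "N * l' dvd c" using H by (auto simp: Gamma0_def)
  obtain m where cm: "c = N * l' * m" using dv by blast
  define c' where "c' = N * m"
  have cc: "c = c' * (p*r - q*q)" using cm l c'_def by simp
  define M where "M = (mat2 a 0 0 a, mat2 (b*p) (b*q) (b*q) (b*r),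
      mat2 (c'*r) (-c'*q) (-c'*q) (c'*p), mat2 \<delta> 0 0 \<delta>)"
  have MSp: "M \<in> Sp4Z"
    unfolding M_def Sp4Z_def using det1 cc
    by (simp add: mat2_transpose mat2_mult mat2_diff mat2_one mat2_add mat2_eq_iff algebra_simps)
  have MG: "M \<in> Gamma0_2 N"
    using MSp unfolding M_def Gamma0_2_def by (simp add: forall_2 c'_def)
  define Z :: "complex^2^2" where "Z = (\<chi> i j. \<tau> * of_int (s$i$j))"
  have Zm: "Z = mat2 (\<tau> * of_int p) (\<tau> * of_int q) (\<tau> * of_int q) (\<tau> * of_int r)"
    unfolding Z_def by (subst lam_mat2) (simp add: sdef)
  have pd: "pos_def_real (mat2 (real_of_int p) q q r)"
    using assms(5) by (subst (asm) lam_mat2) (simp add: sdef)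
  have ZH: "Z \<in> siegel_H2"
  proof -
    have "pos_def_real (Im_mat Z)"
      unfolding pos_def_real_def
    proof (intro conjI allI impI)
      show "transpose (Im_mat Z) = Im_mat Z" by (simp add: Zm Im_mat2 mat2_transpose)
    next
      fix x :: "real^2" assume "x \<noteq> 0"
      then have "0 < x \<bullet> (mat2 (real_of_int p) q q r *v x)" using pd unfolding pos_def_real_def by blast
      then have "0 < Im \<tau> * (x \<bullet> (mat2 (real_of_int p) q q r *v x))" using tau by simp
      then show "0 < x \<bullet> (Im_mat Z *v x)"
        by (simp add: Zm Im_mat2 inner_vec_def matrix_vector_mult_def sum_2 algebra_simps)
    qed
    then show ?thesis unfolding siegel_H2_def by (simp add: Zm mat2_transpose)
  qed
  define w where "w = of_int c * \<tau> + of_int \<delta>"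
  have w0: "w \<noteq> 0"
  proof (cases "c = 0")
    case True
    then have "\<delta> \<noteq> 0" using det1 by auto
    then show ?thesis using True by (simp add: w_def)
  next
    case False
    then have "Im w \<noteq> 0" using tau by (simp add: w_def)
    then show ?thesis by auto
  qed
  have ccC: "(of_int c :: complex) = of_int c' * (of_int p * of_int r - of_int q * of_int q)"
    using cc by (metis of_int_diff of_int_mult)
  have CZD: "cmat (mat2 (c'*r) (-c'*q) (-c'*q) (c'*p)) ** Z + cmat (mat2 \<delta> 0 0 \<delta>) = mat2 w 0 0 w"
    by (simp add: Zm cmat_mat2 mat2_mult mat2_add mat2_eq_iff w_def ccC algebra_simps)
  have AZB: "(cmat (mat2 a 0 0 a) ** Z + cmat (mat2 (b*p) (b*q) (b*q) (b*r))) ** mat2 (inverse w) 0 0 (inverse w)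
     = (\<chi> i j. ((of_int a * \<tau> + of_int b) / w) * of_int (s$i$j))"
    by (subst lam_mat2) (simp add: Zm sdef cmat_mat2 mat2_mult mat2_add mat2_eq_iff divide_inverse algebra_simps)
  have "slash2 k f M Z = chi (det (snd (snd (snd M)))) * f Z"
    using assms(3) MG ZH unfolding siegel_cusp_forms_def by blast
  moreover have "slash2 k f M Z = inverse w ^ (2*k) * f (\<chi> i j. ((of_int a * \<tau> + of_int b) / w) * of_int (s$i$j))"
    unfolding slash2_def M_def using CZD AZB w0
    by (simp add: matrix_inv_scalar mat2_det power_mult power2_eq_square inverse_mult_distrib power_mult_distrib)
  moreover have "chi (det (snd (snd (snd M)))) = chi (d^2)"
  proof -
    have "N * l' dvd (\<delta> - d)" using H mod_eq_dvd_iff by blast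
    then have "N dvd (\<delta> - d)" by (rule dvd_mult_left)
    then obtain t where "\<delta> - d = N * t" by (elim dvdE)
    then have t: "\<delta> = d + N * t" by simp
    have "det (snd (snd (snd M))) = d^2 + N * (t * (2*d + N*t))"
      by (simp add: M_def mat2_det t algebra_simps power2_eq_square)
    then show ?thesis using chi_periodic[OF assms(2)] by simp
  qed
  ultimately show "slash1 (2 * k) (phi_restr s f) (a, b, c, \<delta>) \<tau> = chi (d^2) * phi_restr s f \<tau>"
    by (simp add: slash1_def phi_restr_def w_def Z_def)
qed

end
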